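(* For every $n>6$, if $\Delta,\Delta'\in\mathcal{P}_n$ form a special pair for rule $128$, then $lab_\Delta$ and $lab_{\Delta'}$ differ on exactly one arc among the $2n$ arcs $(i,i+1)$, $(i+1,i)$, $i\in\mathbb{Z}_n$.
   Context: Cells are indexed by $\mathbb{Z}_n=\{0,\dots,n-1\}$, indices modulo $n$. Rule $128$ has local rule $r_{128}(x_1,x_2,x_3)=x_1\wedge x_2\wedge x_3$ and global function $f_{128,n}(x)_i=r_{128}(x_{i-1},x_i,x_{i+1})$. An update schedule is an ordered partition $\Delta=(\Delta_1,\dots,\Delta_k)$ of $\mathbb{Z}_n$ into nonempty blocks; $\mathcal{P}_n$ is the set of them. For a block $B$ let $f^{(B)}(x)_i=f_{128,n}(x)_i$ if $i\in B$ and $x_i$ otherwise; $f^{(\Delta)}_{128,n}=f^{(\Delta_k)}\circ\cdots\circ f^{(\Delta_1)}$. For $u,v\in\mathbb{Z}_n$ with $u\in\Delta_a$, $v\in\Delta_b$, $lab_\Delta((u,v))=\oplus$ if $b\le a$ and $\ominus$ if $a<b$. $\Delta\equiv\Delta'$ iff $lab_\Delta$ and $lab_{\Delta'}$ agree on every arc $(i,i+1)$ and $(i+1,i)$. A pair $\Delta,\Delta'$ is special for rule $128$ if $\Delta\not\equiv\Delta'$ but $f^{(\Delta)}_{128,n}=f^{(\Delta')}_{128,n}$. *)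

theory Defs
  imports Main
begin

text \<open>Cells are the naturals 0..n-1, indices taken modulo n.
  Configurations are functions nat => bool (only the values on 0..n-1 matter).\<close>

definition r128 :: "bool \<Rightarrow> bool \<Rightarrow> bool \<Rightarrow> bool" where
  "r128 x1 x2 x3 = (x1 \<and> x2 \<and> x3)"

definition f128 :: "nat \<Rightarrow> (nat \<Rightarrow> bool) \<Rightarrow> nat \<Rightarrow> bool" where
  "f128 n x i = r128 (x ((i + n - 1) mod n)) (x i) (x ((i + 1) mod n))"

definition is_schedule :: "nat \<Rightarrow> nat set list \<Rightarrow> bool" where
  "is_schedule n D \<longleftrightarrow>
     (\<forall>B\<in>set D. B \<noteq> {}) \<and>
     (\<forall>a<length D. \<forall>b<length D. a \<noteq> b \<longrightarrow> D ! a \<inter> D ! b = {}) \<and>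
     \<Union>(set D) = {0..<n}"

definition block_fun :: "nat \<Rightarrow> nat set \<Rightarrow> (nat \<Rightarrow> bool) \<Rightarrow> nat \<Rightarrow> bool" where
  "block_fun n B x i = (if i \<in> B then f128 n x i else x i)"

fun sched_fun :: "nat \<Rightarrow> nat set list \<Rightarrow> (nat \<Rightarrow> bool) \<Rightarrow> nat \<Rightarrow> bool" where
  "sched_fun n [] = id"
| "sched_fun n (B # Bs) = sched_fun n Bs \<circ> block_fun n B"

definition blk :: "nat set list \<Rightarrow> nat \<Rightarrow> nat" where
  "blk D u = (THE a. a < length D \<and> u \<in> D ! a)"

datatype label = LPlus | LMinus

definition lab :: "nat set list \<Rightarrow> nat \<times> nat \<Rightarrow> label" where
  "lab D e = (if blk D (snd e) \<le> blk D (fst e) then LPlus else LMinus)"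

definition arcs :: "nat \<Rightarrow> (nat \<times> nat) set" where
  "arcs n = {(i, (i + 1) mod n) | i. i < n} \<union> {((i + 1) mod n, i) | i. i < n}"

definition sched_equiv :: "nat \<Rightarrow> nat set list \<Rightarrow> nat set list \<Rightarrow> bool" where
  "sched_equiv n D D' \<longleftrightarrow> (\<forall>e\<in>arcs n. lab D e = lab D' e)"

definition special_pair :: "nat \<Rightarrow> nat set list \<Rightarrow> nat set list \<Rightarrow> bool" where
  "special_pair n D D' \<longleftrightarrow> \<not> sched_equiv n D D' \<and> sched_fun n D = sched_fun n D'"

end

theory Submission
  imports Defs
begin


definition PP :: "(int \<Rightarrow> nat) \<Rightarrow> int \<Rightarrow> bool" where
  "PP c i \<longleftrightarrow> c (i - 1) < c i"
definition QQ :: "(int \<Rightarrow> nat) \<Rightarrow> int \<Rightarrow> bool" where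
  "QQ c i \<longleftrightarrow> c (i + 1) < c i"
definition mir :: "(int \<Rightarrow> nat) \<Rightarrow> int \<Rightarrow> nat" where
  "mir c i = c (- i)"
definition pr :: "(int \<Rightarrow> nat) \<Rightarrow> int \<Rightarrow> nat" where
  "pr c i = (LEAST m. \<not> PP c (i - int m))"
definition qr :: "(int \<Rightarrow> nat) \<Rightarrow> int \<Rightarrow> nat" where
  "qr c i = pr (mir c) (- i)"
definition per :: "nat \<Rightarrow> (int \<Rightarrow> nat) \<Rightarrow> bool" where
  "per n c \<longleftrightarrow> (\<forall>i. c (i + int n) = c i)"

lemma QQ_mir: "QQ c i \<longleftrightarrow> PP (mir c) (- i)"
  by (simp add: QQ_def PP_def mir_def add.commute)
lemma PP_mir: "PP c i \<longleftrightarrow> QQ (mir c) (- i)"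
  by (simp add: QQ_def PP_def mir_def)
lemma mir_mir[simp]: "mir (mir c) = c"
  by (simp add: mir_def fun_eq_iff)
lemma pr_mir: "pr (mir c) i = qr c (- i)"
  by (simp add: qr_def)
lemma qr_mir: "qr (mir c) i = pr c (- i)"
  by (simp add: qr_def)
lemma per_mir: "per n c \<Longrightarrow> per n (mir c)"
  unfolding per_def mir_def
  by (metis add_diff_cancel minus_diff_eq uminus_add_conv_diff)


lemma PP_chain: "(\<forall>s<m. PP c (i - int s)) \<Longrightarrow> c (i - int m) + m \<le> c i"
proof (induction m)
  case 0 then show ?case by simp
next
  case (Suc m)
  then have "c (i - int m) + m \<le> c i" by auto
  moreover have "PP c (i - int m)" using Suc.prems by auto
  then have "c (i - int m - 1) < c (i - int m)" by (simp add: PP_def)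
  ultimately show ?case by (simp add: algebra_simps)
qed

lemma ex_notPP: "\<exists>m. \<not> PP c (i - int m)"
proof (rule ccontr)
  assume "\<not> ?thesis"
  then have "\<forall>s<Suc (c i). PP c (i - int s)" by auto
  from PP_chain[OF this] show False by simp
qed

lemma pr_notPP: "\<not> PP c (i - int (pr c i))"
  unfolding pr_def by (rule LeastI_ex[OF ex_notPP])
lemma pr_PP: "s < pr c i \<Longrightarrow> PP c (i - int s)"
  unfolding pr_def using not_less_Least by blast

lemma pr_ge_iff: "m \<le> pr c i \<longleftrightarrow> (\<forall>s<m. PP c (i - int s))"
proof
  assume "m \<le> pr c i" then show "\<forall>s<m. PP c (i - int s)" using pr_PP by auto
next
  assume h: "\<forall>s<m. PP c (i - int s)"
  show "m \<le> pr c i"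
  proof (rule ccontr)
    assume "\<not> m \<le> pr c i"
    then have "pr c i < m" by simp
    with h pr_notPP[of c i] show False by blast
  qed
qed

lemma pr_eqI: assumes "\<forall>s<m. PP c (i - int s)" "\<not> PP c (i - int m)" shows "pr c i = m"
proof -
  have "m \<le> pr c i" using assms(1) pr_ge_iff by blast
  moreover have "\<not> Suc m \<le> pr c i" using assms(2) pr_ge_iff[of "Suc m" c i] by auto
  ultimately show ?thesis by simp
qed

lemma pr_pos_iff: "0 < pr c i \<longleftrightarrow> PP c i"
  using pr_ge_iff[of 1 c i] by auto

lemma pr_shift: assumes "s \<le> pr c i" shows "pr c (i - int s) = pr c i - s"
proof (rule pr_eqI)
  show "\<forall>t<pr c i - s. PP c (i - int s - int t)"
  proof (intro allI impI)
    fix t assume "t < pr c i - s"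
    then have "s + t < pr c i" by simp
    from pr_PP[OF this] show "PP c (i - int s - int t)" by (simp add: algebra_simps)
  qed
  show "\<not> PP c (i - int s - int (pr c i - s))"
    using pr_notPP[of c i] assms by (simp add: of_nat_diff)
qed

lemma per_PP: assumes "per n c" shows "PP c (i + int n) = PP c i"
proof -
  have "c (i + int n - 1) = c (i - 1)" using assms unfolding per_def
    by (metis add.commute add_diff_eq)
  moreover have "c (i + int n) = c i" using assms unfolding per_def by blast
  ultimately show ?thesis unfolding PP_def by simp
qed

lemma pr_per: assumes "per n c" shows "pr c (i + int n) = pr c i"
proof -
  have "\<And>m. PP c (i + int n - int m) = PP c (i - int m)"
    using per_PP[OF assms] by (metis add.commute add_diff_eq)
  then show ?thesis unfolding pr_def by simp
qed

lemma pr_le: assumes "per n c" "n > 0" shows "pr c i \<le> n - 1"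
proof (rule ccontr)
  assume "\<not> ?thesis"
  then have "n \<le> pr c i" by simp
  then have "\<forall>s<n. PP c (i - int s)" using pr_ge_iff by blast
  from PP_chain[OF this] have "c (i - int n) + n \<le> c i" .
  moreover have "c (i - int n) = c i" using assms(1) unfolding per_def by (metis diff_add_cancel)
  ultimately show False using assms(2) by simp
qed

lemma qr_ge_iff: "m \<le> qr c i \<longleftrightarrow> (\<forall>s<m. QQ c (i + int s))"
  unfolding qr_def pr_ge_iff QQ_mir by (simp add: algebra_simps)
lemma qr_pos_iff: "0 < qr c i \<longleftrightarrow> QQ c i"
  unfolding qr_def pr_pos_iff QQ_mir by simp
lemma qr_shift: "s \<le> qr c i \<Longrightarrow> qr c (i + int s) = qr c i - s"
  unfolding qr_def using pr_shift[of s "mir c" "-i"] by (simp add: algebra_simps)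
lemma qr_per: "per n c \<Longrightarrow> qr c (i + int n) = qr c i"
  unfolding qr_def using pr_per[of n "mir c" "- i - int n"] per_mir[of n c] by (simp add: algebra_simps)
lemma qr_le: "per n c \<Longrightarrow> n > 0 \<Longrightarrow> qr c i \<le> n - 1"
  unfolding qr_def using pr_le per_mir by blast

lemma QQ_notPP: "QQ c i \<Longrightarrow> \<not> PP c (i + 1)"
  by (simp add: QQ_def PP_def)



lemma per_QQ: assumes "per n c" shows "QQ c (i + int n) = QQ c i"
  using qr_per[OF assms] qr_pos_iff by metis

definition full :: "nat \<Rightarrow> (int \<Rightarrow> nat) \<Rightarrow> int \<Rightarrow> bool" where
  "full n c i \<longleftrightarrow> n - 3 \<le> pr c i + qr c i"
definition AG :: "nat \<Rightarrow> (int \<Rightarrow> nat) \<Rightarrow> (int \<Rightarrow> nat) \<Rightarrow> bool" where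
  "AG n c c' \<longleftrightarrow> (\<forall>i. (full n c i \<and> full n c' i) \<or> (pr c i = pr c' i \<and> qr c i = qr c' i))"

lemma one:
  assumes pc: "per n c" and pc': "per n c'" and n7: "7 \<le> n" and ag: "AG n c c'"
    and Pa: "PP c a" and nPa: "\<not> PP c' a"
  shows "\<forall>s. 0 < s \<and> s < n \<longrightarrow> (PP c (a + int s) \<longleftrightarrow> PP c' (a + int s))"
    and "\<forall>s. s < n \<longrightarrow> (QQ c (a + int s) \<longleftrightarrow> QQ c' (a + int s))"
proof -
  have n0: "n > 0" using n7 by simp
  define Y where "Y = qr c' a"
  define X where "X = pr c a"
  have p'a: "pr c' a = 0" using nPa pr_pos_iff by blast
  have X1: "X \<ge> 1" using Pa pr_pos_iff[of c a] X_def by simp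
  have Xle: "X \<le> n - 1" using pr_le[OF pc n0] X_def by blast
  have Yle: "Y \<le> n - 1" using qr_le[OF pc' n0] Y_def by blast
  have fa: "full n c a \<and> full n c' a" using ag p'a X1 X_def unfolding AG_def by force
  have Yge: "Y \<ge> n - 3" using fa p'a Y_def unfolding full_def by simp
  have q's: "qr c' (a + int s) = Y - s" if "s \<le> Y" for s using qr_shift[of s c' a] that Y_def by simp
  have p's: "pr c' (a + int s) = 0" if "1 \<le> s" "s \<le> Y" for s
  proof -
    have "qr c' (a + int (s - 1)) = Y - (s - 1)" using q's[of "s - 1"] that by linarith
    then have "QQ c' (a + int (s - 1))" using qr_pos_iff[of c' "a + int (s - 1)"] that by simp
    then have "\<not> PP c' (a + int (s - 1) + 1)" by (rule QQ_notPP)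
    moreover have "a + int (s - 1) + 1 = a + int s" using that by simp
    ultimately show ?thesis using pr_pos_iff[of c' "a + int s"] by simp
  qed
  have Ds: "qr c (a + int s) = Y - s \<and> pr c (a + int s) = 0" if "3 \<le> s" "s \<le> Y" for s
  proof -
    have "\<not> full n c' (a + int s)" using q's p's that n7 Yle unfolding full_def by simp
    then have "pr c (a + int s) = pr c' (a + int s) \<and> qr c (a + int s) = qr c' (a + int s)"
      using ag unfolding AG_def by blast
    then show ?thesis using q's[of s] p's[of s] that by simp
  qed
  have Y4: "Y \<ge> 4" using Yge n7 by simp
  have X_le: "X \<le> n - Y"
  proof (rule ccontr)
    assume "\<not> ?thesis"
    define s where "s = n - Y + 1"
    have "s - 1 < pr c a" using \<open>\<not> X \<le> n - Y\<close> X_def s_def by simp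
    then have "PP c (a - int (s - 1))" by (rule pr_PP)
    moreover have "a - int (s - 1) = a - int s + 1" using s_def by simp
    ultimately have "\<not> QQ c (a - int s)" using QQ_notPP by metis
    then have "qr c (a - int s) = 0" using qr_pos_iff by blast
    moreover have "qr c (a - int s + int n) = qr c (a - int s)" by (rule qr_per[OF pc])
    moreover have "a - int s + int n = a + int (Y - 1)" using s_def Yle Y4 by simp
    moreover have "qr c (a + int (Y - 1)) = 1" using Ds[of "Y - 1"] Y4 by simp
    ultimately show False by simp
  qed
  have qa: "qr c a = Y"
  proof -
    have fca: "n - 3 \<le> X + qr c a" using fa X_def unfolding full_def by simp
    consider "qr c a \<ge> 3" | "qr c a = 1" | "qr c a = 2" | "qr c a = 0" by linarith
    then show ?thesis
    proof cases
      case 1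
      then have "qr c (a + int 3) = qr c a - 3" by (rule qr_shift)
      moreover have "qr c (a + int 3) = Y - 3" using Ds[of 3] Y4 by simp
      ultimately show ?thesis using 1 Y4 by simp
    next
      case 2
      then have "qr c (a + int 1) = 0" using qr_shift[of 1 c a] by simp
      moreover have "full n c' (a + int 1)"
      proof (rule ccontr)
        assume "\<not> full n c' (a + int 1)"
        then have "qr c (a + int 1) = qr c' (a + int 1)" using ag unfolding AG_def by blast
        then show False using q's[of 1] Y4 \<open>qr c (a + int 1) = 0\<close> by simp
      qed
      ultimately have "Y - 1 \<ge> n - 3" using q's[of 1] p's[of 1] Y4 unfolding full_def by simp
      then show ?thesis using fca X_le 2 n7 Yle by linarith
    next
      case 3
      then have "qr c (a + int 2) = 0" using qr_shift[of 2 c a] by simp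
      moreover have "full n c' (a + int 2)"
      proof (rule ccontr)
        assume "\<not> full n c' (a + int 2)"
        then have "qr c (a + int 2) = qr c' (a + int 2)" using ag unfolding AG_def by blast
        then show False using q's[of 2] Y4 \<open>qr c (a + int 2) = 0\<close> by simp
      qed
      ultimately have "Y - 2 \<ge> n - 3" using q's[of 2] p's[of 2] Y4 unfolding full_def by simp
      then show ?thesis using fca X_le 3 n7 Yle by linarith
    next
      case 4
      then show ?thesis using fca X_le n7 Yle Y4 by linarith
    qed
  qed
  have mid: "(PP c (a + int s) \<longleftrightarrow> PP c' (a + int s)) \<and> (QQ c (a + int s) \<longleftrightarrow> QQ c' (a + int s))"
    if "1 \<le> s" "s \<le> Y" for s
  proof -
    have q1: "qr c (a + int s) = Y - s" using qr_shift[of s c a] qa that by simp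
    have "qr c (a + int (s - 1)) = Y - (s - 1)" using qr_shift[of "s-1" c a] qa that by linarith
    then have "QQ c (a + int (s - 1))" using qr_pos_iff[of c "a + int (s - 1)"] that by simp
    then have "\<not> PP c (a + int (s - 1) + 1)" by (rule QQ_notPP)
    moreover have "a + int (s - 1) + 1 = a + int s" using that by simp
    ultimately have p1: "\<not> PP c (a + int s)" by simp
    have "\<not> PP c' (a + int s)" using p's[OF that] pr_pos_iff[of c' "a + int s"] by simp
    moreover have "QQ c (a + int s) \<longleftrightarrow> QQ c' (a + int s)"
      using q1 q's[of s] that qr_pos_iff[of c "a + int s"] qr_pos_iff[of c' "a + int s"] by simp
    ultimately show ?thesis using p1 by simp
  qed
  have far: "(PP c (a + int s) \<longleftrightarrow> PP c' (a + int s)) \<and> (QQ c (a + int s) \<longleftrightarrow> QQ c' (a + int s))"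
    if "Y < s" "s < n" for s
  proof -
    define r where "r = n - s"
    define k where "k = a - int r"
    have kn: "k + int n = a + int s" using k_def r_def that by simp
    have r1: "1 \<le> r" "r \<le> n - Y - 1" using r_def that by auto
    have qk: "qr c k \<le> r - 1"
    proof (rule ccontr)
      assume "\<not> ?thesis"
      then have "r - 1 < qr c k" by simp
      then have "QQ c (k + int (r - 1))" using qr_ge_iff[of "Suc (r - 1)" c k] by auto
      moreover have "k + int (r - 1) = a - 1" using k_def r1 by simp
      ultimately have "\<not> PP c a" using QQ_notPP by fastforce
      then show False using Pa by simp
    qed
    have pk: "pr c k \<le> n - Y - r"
    proof (rule ccontr)
      assume "\<not> ?thesis"
      then have "n - Y - r < pr c k" by simp
      then have "PP c (k - int (n - Y - r))" by (rule pr_PP)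
      moreover have "k - int (n - Y - r) + int n = a + int Y" using k_def r1 Yle by simp
      moreover have "\<not> PP c (a + int Y)" using Ds[of Y] Y4 pr_pos_iff[of c "a + int Y"] by simp
      moreover have "PP c (k - int (n - Y - r) + int n) = PP c (k - int (n - Y - r))" by (rule per_PP[OF pc])
      ultimately show False by simp
    qed
    have "\<not> full n c k" using pk qk r1 n7 Yge unfolding full_def by linarith
    then have "pr c k = pr c' k \<and> qr c k = qr c' k" using ag unfolding AG_def by blast
    then have "(PP c k \<longleftrightarrow> PP c' k) \<and> (QQ c k \<longleftrightarrow> QQ c' k)"
      using pr_pos_iff[of c k] qr_pos_iff[of c k] pr_pos_iff[of c' k] qr_pos_iff[of c' k] by simp
    then show ?thesis using kn per_PP[OF pc, of k] per_PP[OF pc', of k] per_QQ[OF pc, of k] per_QQ[OF pc', of k] by simp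
  qed
  show "\<forall>s. 0 < s \<and> s < n \<longrightarrow> (PP c (a + int s) \<longleftrightarrow> PP c' (a + int s))"
  proof (intro allI impI)
    fix s assume "0 < s \<and> s < n"
    then show "PP c (a + int s) \<longleftrightarrow> PP c' (a + int s)" using mid[of s] far[of s] by linarith
  qed
  show "\<forall>s. s < n \<longrightarrow> (QQ c (a + int s) \<longleftrightarrow> QQ c' (a + int s))"
  proof (intro allI impI)
    fix s assume "s < n"
    show "QQ c (a + int s) \<longleftrightarrow> QQ c' (a + int s)"
    proof (cases "s = 0")
      case True
      then show ?thesis using qa Y_def Y4 qr_pos_iff[of c a] qr_pos_iff[of c' a] by simp
    next
      case False
      then show ?thesis using mid[of s] far[of s] \<open>s < n\<close> by linarith
    qed
  qed
qed



lemma blk_props: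
  assumes "is_schedule n D" "i < n"
  shows "blk D i < length D \<and> i \<in> D ! blk D i"
proof -
  have "i \<in> \<Union>(set D)" using assms unfolding is_schedule_def by auto
  then obtain a where a: "a < length D" "i \<in> D ! a" by (metis UnionE in_set_conv_nth)
  have uniq: "b = a" if "b < length D" "i \<in> D ! b" for b
    using assms(1) a that unfolding is_schedule_def by blast
  have "\<exists>!a. a < length D \<and> i \<in> D ! a" using a uniq by blast
  then show ?thesis unfolding blk_def by (rule theI')
qed

lemma blk_eq:
  assumes "is_schedule n D" "a < length D" "i \<in> D ! a"
  shows "blk D i = a"
proof -
  have "i < n" using assms unfolding is_schedule_def
    by (metis UnionI atLeastLessThan_iff nth_mem)
  then have "blk D i < length D \<and> i \<in> D ! blk D i" using blk_props assms(1) by blast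
  then show ?thesis using assms unfolding is_schedule_def by blast
qed

lemma sched_fun_snoc: "sched_fun n (xs @ [B]) = block_fun n B \<circ> sched_fun n xs"
  by (induction xs) auto

lemma V_Suc: "t < length D \<Longrightarrow>
  sched_fun n (take (Suc t) D) x = block_fun n (D ! t) (sched_fun n (take t D) x)"
  by (simp add: take_Suc_conv_app_nth sched_fun_snoc)

lemma V_before:
  assumes "is_schedule n D" "i < n"
  shows "t \<le> blk D i \<Longrightarrow> sched_fun n (take t D) x i = x i"
proof (induction t)
  case 0 then show ?case by simp
next
  case (Suc t)
  have bl: "blk D i < length D" using blk_props assms by blast
  then have tl: "t < length D" using Suc.prems by simp
  have "i \<notin> D ! t"
  proof
    assume "i \<in> D ! t"
    then have "blk D i = t" using blk_eq assms(1) tl by blast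
    then show False using Suc.prems by simp
  qed
  then show ?case using V_Suc[OF tl] Suc by (simp add: block_fun_def)
qed

lemma V_after:
  assumes "is_schedule n D" "i < n"
  shows "blk D i < t \<Longrightarrow> t \<le> length D \<Longrightarrow> sched_fun n (take t D) x i = sched_fun n (take (Suc (blk D i)) D) x i"
proof (induction t)
  case 0 then show ?case by simp
next
  case (Suc t)
  show ?case
  proof (cases "t = blk D i")
    case True then show ?thesis by simp
  next
    case False
    have tl: "t < length D" using Suc.prems by simp
    have "i \<notin> D ! t"
    proof
      assume "i \<in> D ! t"
      then have "blk D i = t" using blk_eq assms(1) tl by blast
      then show False using False by simp
    qed
    then show ?thesis using V_Suc[OF tl] Suc False by (simp add: block_fun_def)
  qed
qed

lemma local_eq:
  assumes sch: "is_schedule n D" and i: "i < n"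
  defines "il \<equiv> (i + n - 1) mod n" and "ir \<equiv> (i + 1) mod n"
  shows "sched_fun n D x i = (x i \<and> (if blk D il < blk D i then sched_fun n D x il else x il)
          \<and> (if blk D ir < blk D i then sched_fun n D x ir else x ir))"
proof -
  define V where "V t = sched_fun n (take t D) x" for t
  define b where "b = blk D i"
  have n0: "n > 0" using i by simp
  have ilt: "il < n" "ir < n" using n0 il_def ir_def by auto
  have bl: "b < length D" "i \<in> D ! b" using blk_props[OF sch i] b_def by auto
  have yV: "sched_fun n D x = V (length D)" using V_def by simp
  have yi: "V (length D) i = V (Suc b) i"
  proof (cases "Suc b = length D")
    case True then show ?thesis by simp
  next
    case False then show ?thesis using V_after[OF sch i, of "length D" x] bl b_def V_def by simp
  qed
  have at: "V (Suc b) i = f128 n (V b) i" using V_Suc[OF bl(1)] bl V_def by (simp add: block_fun_def)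
  have nb: "V b k = (if blk D k < b then V (length D) k else x k)" if "k < n" for k
  proof (cases "blk D k < b")
    case True
    have "blk D k < length D" using blk_props[OF sch that] by blast
    have "V b k = V (Suc (blk D k)) k" using V_after[OF sch that True] bl V_def by simp
    moreover have "V (length D) k = V (Suc (blk D k)) k"
    proof (cases "Suc (blk D k) = length D")
      case True then show ?thesis by simp
    next
      case False then show ?thesis using V_after[OF sch that, of "length D" x] \<open>blk D k < length D\<close> V_def by simp
    qed
    ultimately show ?thesis using True by simp
  next
    case False
    then show ?thesis using V_before[OF sch that, of b x] V_def by simp
  qed
  have "V b i = x i" using V_before[OF sch i, of b x] V_def b_def by simp
  moreover have "f128 n (V b) i = r128 (V b il) (V b i) (V b ir)" unfolding f128_def il_def ir_def by simp
  ultimately show ?thesis using yV yi at nb[OF ilt(1)] nb[OF ilt(2)] b_def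
    by (auto simp: r128_def)
qed

lemma y_le_x:
  assumes "is_schedule n D" "i < n" "sched_fun n D x i"
  shows "x i"
  using local_eq[OF assms(1,2)] assms(3) by metis



definition cc :: "nat \<Rightarrow> nat set list \<Rightarrow> int \<Rightarrow> nat" where
  "cc n D i = blk D (nat (i mod int n))"

lemma modl: assumes "n > 0" shows "(nat (k mod int n) + n - 1) mod n = nat ((k - 1) mod int n)"
proof -
  have "int ((nat (k mod int n) + n - 1) mod n) = int (nat (k mod int n) + n - 1) mod int n"
    by (simp add: zmod_int)
  also have "int (nat (k mod int n) + n - 1) = k mod int n + int n - 1" using assms by simp
  also have "(k mod int n + int n - 1) mod int n = (k - 1) mod int n"
    by (metis add.commute add_diff_eq mod_add_self2 mod_diff_left_eq)
  finally show ?thesis by (metis nat_int)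
qed

lemma modr: assumes "n > 0" shows "(nat (k mod int n) + 1) mod n = nat ((k + 1) mod int n)"
proof -
  have "int ((nat (k mod int n) + 1) mod n) = int (nat (k mod int n) + 1) mod int n"
    by (simp add: zmod_int)
  also have "int (nat (k mod int n) + 1) = k mod int n + 1" using assms by simp
  also have "(k mod int n + 1) mod int n = (k + 1) mod int n"
    by (simp add: mod_add_left_eq)
  finally show ?thesis by (metis nat_int)
qed

lemma per_cc: "per n (cc n D)"
  unfolding per_def cc_def by simp

lemma local_eq_int:
  assumes sch: "is_schedule n D" and n0: "n > 0"
  shows "sched_fun n D x (nat (k mod int n)) =
     (x (nat (k mod int n)) \<and>
      (if PP (cc n D) k then sched_fun n D x (nat ((k - 1) mod int n)) else x (nat ((k - 1) mod int n))) \<and>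
      (if QQ (cc n D) k then sched_fun n D x (nat ((k + 1) mod int n)) else x (nat ((k + 1) mod int n))))"
proof -
  have i: "nat (k mod int n) < n" using n0
    by (simp add: nat_less_iff)
  show ?thesis using local_eq[OF sch i, of x] modl[OF n0, of k] modr[OF n0, of k]
    unfolding PP_def QQ_def cc_def by simp
qed

lemma test_char:
  fixes j :: int
  assumes sch: "is_schedule n D" and n0: "n > 0"
  defines "Yf \<equiv> \<lambda>k. sched_fun n D (\<lambda>u. u \<noteq> nat (j mod int n)) (nat (k mod int n))"
  defines "c \<equiv> cc n D"
  shows "(i - j) mod int n \<noteq> 0 \<Longrightarrow>
    (\<not> Yf i \<longleftrightarrow> (nat ((i - j) mod int n) - 1 \<le> pr c i \<or> n - 1 - nat ((i - j) mod int n) \<le> qr c i))"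
proof (induction "c i" arbitrary: i rule: less_induct)
  case (less i)
  define Xf where "Xf = (\<lambda>k::int. (k - j) mod int n \<noteq> 0)"
  have Xf_eq: "(nat (k mod int n) \<noteq> nat (j mod int n)) = Xf k" for k
  proof -
    have "(nat (k mod int n) \<noteq> nat (j mod int n)) = (k mod int n \<noteq> j mod int n)"
      using n0 by (metis Euclidean_Rings.pos_mod_sign eq_nat_nat_iff of_nat_0_less_iff)
    also have "\<dots> = Xf k" unfolding Xf_def by (metis mod_eq_dvd_iff dvd_eq_mod_eq_0)
    finally show ?thesis .
  qed
  have loc: "Yf k = (Xf k \<and> (if PP c k then Yf (k - 1) else Xf (k - 1)) \<and> (if QQ c k then Yf (k + 1) else Xf (k + 1)))" for k
    using local_eq_int[OF sch n0, of "\<lambda>u. u \<noteq> nat (j mod int n)" k] Xf_eq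
    unfolding Yf_def c_def by simp
  have YX: "Yf k \<Longrightarrow> Xf k" for k using loc by metis
  define r where "r = (i - j) mod int n"
  have r0: "0 \<le> r" "r < int n" using n0 r_def by simp_all
  have rne: "r \<noteq> 0" using less.prems r_def by simp
  define d where "d = nat ((i - j) mod int n)"
  have dr_eq: "int d = r" using d_def r_def r0 by simp
  have d1: "1 \<le> d" "d \<le> n - 1" using dr_eq r0 rne by linarith+
  have rl: "(i - 1 - j) mod int n = r - 1"
  proof -
    have "(i - 1 - j) mod int n = (r - 1) mod int n" unfolding r_def by (simp add: mod_diff_left_eq algebra_simps)
    also have "\<dots> = r - 1" using r0 rne by (simp add: mod_pos_pos_trivial)
    finally show ?thesis .
  qed
  have dl: "nat ((i - 1 - j) mod int n) = d - 1" using rl dr_eq by linarith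
  have rr: "d \<le> n - 2 \<Longrightarrow> (i + 1 - j) mod int n = r + 1"
  proof -
    assume h: "d \<le> n - 2"
    have "(i + 1 - j) mod int n = (r + 1) mod int n" unfolding r_def using mod_add_left_eq[of "i - j" "int n" 1] by (simp add: algebra_simps)
    also have "\<dots> = r + 1" using r0 h dr_eq d1 by (intro mod_pos_pos_trivial) linarith+
    finally show ?thesis .
  qed
  have dr: "d \<le> n - 2 \<Longrightarrow> nat ((i + 1 - j) mod int n) = d + 1" using rr dr_eq by (simp add: nat_add_distrib)
  have Xi: "Xf i" using less.prems Xf_def by simp
  have Xl: "Xf (i - 1) \<longleftrightarrow> d \<noteq> 1" using rl dr_eq unfolding Xf_def by linarith
  have Xr: "Xf (i + 1) \<longleftrightarrow> d \<noteq> n - 1"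
  proof
    assume "Xf (i + 1)"
    show "d \<noteq> n - 1"
    proof
      assume "d = n - 1"
      then have "r = int n - 1" using dr_eq d1 by linarith
      have "(i + 1 - j) mod int n = (r + 1) mod int n" unfolding r_def using mod_add_left_eq[of "i - j" "int n" 1] by (simp add: algebra_simps)
      then have "(i + 1 - j) mod int n = 0" using \<open>r = int n - 1\<close> by simp
      then show False using \<open>Xf (i + 1)\<close> Xf_def by simp
    qed
  next
    assume "d \<noteq> n - 1"
    then have "d \<le> n - 2" using d1 by simp
    then show "Xf (i + 1)" using dr Xf_def by fastforce
  qed
  show ?case unfolding d_def[symmetric]
  proof
    assume nY: "\<not> Yf i"
    consider "PP c i" "\<not> Yf (i - 1)" | "\<not> PP c i" "\<not> Xf (i - 1)" | "QQ c i" "\<not> Yf (i + 1)" | "\<not> QQ c i" "\<not> Xf (i + 1)"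
      using loc[of i] nY Xi by (auto split: if_splits)
    then show "d - 1 \<le> pr c i \<or> n - 1 - d \<le> qr c i"
    proof cases
      case 1
      show ?thesis
      proof (cases "d = 1")
        case True then show ?thesis by simp
      next
        case False
        have lt: "c (i - 1) < c i" using 1 PP_def by blast
        have ne: "(i - 1 - j) mod int n \<noteq> 0" using rl dr_eq False by linarith
        have IH: "nat ((i - 1 - j) mod int n) - 1 \<le> pr c (i - 1) \<or> n - 1 - nat ((i - 1 - j) mod int n) \<le> qr c (i - 1)"
          using less.hyps[OF lt ne] 1 by blast
        then show ?thesis
        proof
          assume "nat ((i - 1 - j) mod int n) - 1 \<le> pr c (i - 1)"
          moreover have "pr c (i - 1) = pr c i - 1" using pr_shift[of 1 c i] 1 pr_pos_iff[of c i] by simp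
          moreover have "pr c i \<ge> 1" using 1 pr_pos_iff[of c i] by simp
          ultimately show ?thesis using dl False d1 by linarith
        next
          assume "n - 1 - nat ((i - 1 - j) mod int n) \<le> qr c (i - 1)"
          then have "1 \<le> qr c (i - 1)" using dl d1 by simp
          then have "QQ c (i - 1)" using qr_pos_iff[of c "i - 1"] by simp
          then show ?thesis using 1 unfolding QQ_def PP_def by simp
        qed
      qed
    next
      case 2 then show ?thesis using Xl by simp
    next
      case 3
      show ?thesis
      proof (cases "d = n - 1")
        case True then show ?thesis by simp
      next
        case False
        then have dn: "d \<le> n - 2" using d1 by simp
        have lt: "c (i + 1) < c i" using 3 QQ_def by blast
        have ne: "(i + 1 - j) mod int n \<noteq> 0" using rr[OF dn] r0 by linarith
        have IH: "nat ((i + 1 - j) mod int n) - 1 \<le> pr c (i + 1) \<or> n - 1 - nat ((i + 1 - j) mod int n) \<le> qr c (i + 1)"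
          using less.hyps[OF lt ne] 3 by blast
        then show ?thesis
        proof
          assume "nat ((i + 1 - j) mod int n) - 1 \<le> pr c (i + 1)"
          then have "1 \<le> pr c (i + 1)" using dr[OF dn] d1 by simp
          then have "PP c (i + 1)" using pr_pos_iff[of c "i + 1"] by simp
          then show ?thesis using 3 unfolding QQ_def PP_def by simp
        next
          assume "n - 1 - nat ((i + 1 - j) mod int n) \<le> qr c (i + 1)"
          moreover have "qr c (i + 1) = qr c i - 1" using qr_shift[of 1 c i] 3 qr_pos_iff[of c i] by simp
          moreover have "qr c i \<ge> 1" using 3 qr_pos_iff[of c i] by simp
          ultimately show ?thesis using dr[OF dn] dn d1 by linarith
        qed
      qed
    next
      case 4 then show ?thesis using Xr by simp
    qed
  next
    assume "d - 1 \<le> pr c i \<or> n - 1 - d \<le> qr c i"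
    then show "\<not> Yf i"
    proof
      assume h: "d - 1 \<le> pr c i"
      show "\<not> Yf i"
      proof (cases "d = 1")
        case True
        then have "\<not> Yf (i - 1)" "\<not> Xf (i - 1)" using Xl YX by auto
        then show ?thesis using loc[of i] by auto
      next
        case False
        then have "pr c i \<ge> 1" using h d1 by simp
        then have P: "PP c i" using pr_pos_iff[of c i] by simp
        have lt: "c (i - 1) < c i" using P PP_def by blast
        have ne: "(i - 1 - j) mod int n \<noteq> 0" using rl dr_eq False by linarith
        have "pr c (i - 1) = pr c i - 1" using pr_shift[of 1 c i] \<open>pr c i \<ge> 1\<close> by simp
        then have "nat ((i - 1 - j) mod int n) - 1 \<le> pr c (i - 1)" using dl h by simp
        then have "\<not> Yf (i - 1)" using less.hyps[OF lt ne] by blast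
        then show ?thesis using loc[of i] P by simp
      qed
    next
      assume h: "n - 1 - d \<le> qr c i"
      show "\<not> Yf i"
      proof (cases "d = n - 1")
        case True
        then have "\<not> Yf (i + 1)" "\<not> Xf (i + 1)" using Xr YX by auto
        then show ?thesis using loc[of i] by auto
      next
        case False
        then have dn: "d \<le> n - 2" using d1 by simp
        then have "qr c i \<ge> 1" using h d1 by simp
        then have Q: "QQ c i" using qr_pos_iff[of c i] by simp
        have lt: "c (i + 1) < c i" using Q QQ_def by blast
        have ne: "(i + 1 - j) mod int n \<noteq> 0" using rr[OF dn] r0 by linarith
        have "qr c (i + 1) = qr c i - 1" using qr_shift[of 1 c i] \<open>qr c i \<ge> 1\<close> by simp
        then have "n - 1 - nat ((i + 1 - j) mod int n) \<le> qr c (i + 1)" using dr[OF dn] h by simp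
        then have "\<not> Yf (i + 1)" using less.hyps[OF lt ne] by blast
        then show ?thesis using loc[of i] Q by simp
      qed
    qed
  qed
qed



lemma notfull_eq:
  fixes p q p' q' n :: nat
  assumes H: "\<forall>t. 1 \<le> t \<and> t \<le> n - 1 \<longrightarrow> ((t - 1 \<le> p \<or> n - 1 - t \<le> q) \<longleftrightarrow> (t - 1 \<le> p' \<or> n - 1 - t \<le> q'))"
    and n7: "7 \<le> n" and nf: "\<not> n - 3 \<le> p + q"
  shows "p = p' \<and> q = q'"
proof -
  have r1: "1 \<le> p + 2 \<and> p + 2 \<le> n - 1" "1 \<le> n - 2 - q \<and> n - 2 - q \<le> n - 1" using nf n7 by arith+
  have e1: "(p + 2 - 1 \<le> p \<or> n - 1 - (p + 2) \<le> q) \<longleftrightarrow> (p + 2 - 1 \<le> p' \<or> n - 1 - (p + 2) \<le> q')"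
    using H[rule_format, OF r1(1)] .
  have e2: "(n - 2 - q - 1 \<le> p \<or> n - 1 - (n - 2 - q) \<le> q) \<longleftrightarrow> (n - 2 - q - 1 \<le> p' \<or> n - 1 - (n - 2 - q) \<le> q')"
    using H[rule_format, OF r1(2)] .
  have l1: "\<not> (p + 2 - 1 \<le> p \<or> n - 1 - (p + 2) \<le> q)" using nf by arith
  have l2: "\<not> (n - 2 - q - 1 \<le> p \<or> n - 1 - (n - 2 - q) \<le> q)" using nf n7 by arith
  have m1: "\<not> (p + 2 - 1 \<le> p')" "\<not> (n - 1 - (p + 2) \<le> q')" using e1 l1 by blast+
  have m2: "\<not> (n - 2 - q - 1 \<le> p')" "\<not> (n - 1 - (n - 2 - q) \<le> q')" using e2 l2 by blast+
  have a1: "p' \<le> p" "q' \<le> q" "p' + q' < n - 3" using m1 m2 nf n7 by arith+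
  have r2: "1 \<le> p' + 2 \<and> p' + 2 \<le> n - 1" "1 \<le> n - 2 - q' \<and> n - 2 - q' \<le> n - 1" using a1 n7 by arith+
  have e3: "(p' + 2 - 1 \<le> p \<or> n - 1 - (p' + 2) \<le> q) \<longleftrightarrow> (p' + 2 - 1 \<le> p' \<or> n - 1 - (p' + 2) \<le> q')"
    using H[rule_format, OF r2(1)] .
  have e4: "(n - 2 - q' - 1 \<le> p \<or> n - 1 - (n - 2 - q') \<le> q) \<longleftrightarrow> (n - 2 - q' - 1 \<le> p' \<or> n - 1 - (n - 2 - q') \<le> q')"
    using H[rule_format, OF r2(2)] .
  have l3: "\<not> (p' + 2 - 1 \<le> p' \<or> n - 1 - (p' + 2) \<le> q')" using a1 by arith
  have l4: "\<not> (n - 2 - q' - 1 \<le> p' \<or> n - 1 - (n - 2 - q') \<le> q')" using a1 n7 by arith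
  have m3: "\<not> (p' + 2 - 1 \<le> p)" using e3 l3 by blast
  have m4: "\<not> (n - 1 - (n - 2 - q') \<le> q)" using e4 l4 by blast
  show ?thesis using m3 m4 a1 n7 by arith
qed

lemma AG_from_sched:
  assumes s1: "is_schedule n D" and s2: "is_schedule n D'" and n7: "7 \<le> n"
    and eq: "sched_fun n D = sched_fun n D'"
  shows "AG n (cc n D) (cc n D')"
proof -
  have n0: "n > 0" using n7 by simp
  have H: "\<forall>t. 1 \<le> t \<and> t \<le> n - 1 \<longrightarrow>
     ((t - 1 \<le> pr (cc n D) i \<or> n - 1 - t \<le> qr (cc n D) i) \<longleftrightarrow> (t - 1 \<le> pr (cc n D') i \<or> n - 1 - t \<le> qr (cc n D') i))" for i
  proof (intro allI impI)
    fix t :: nat assume t: "1 \<le> t \<and> t \<le> n - 1"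
    define j where "j = i - int t"
    have "t < n" using t n7 by arith
    have m: "(i - j) mod int n = int t" using j_def \<open>t < n\<close> by (simp add: mod_pos_pos_trivial)
    have m0: "(i - j) mod int n \<noteq> 0" using m t by simp
    have nm: "nat ((i - j) mod int n) = t" using m by simp
    show "(t - 1 \<le> pr (cc n D) i \<or> n - 1 - t \<le> qr (cc n D) i) \<longleftrightarrow> (t - 1 \<le> pr (cc n D') i \<or> n - 1 - t \<le> qr (cc n D') i)"
      using test_char[OF s1 n0 m0] test_char[OF s2 n0 m0] eq nm by simp
  qed
  have pl: "pr (cc n E) i \<le> n - 1" "qr (cc n E) i \<le> n - 1" for E i
    using pr_le[OF per_cc n0] qr_le[OF per_cc n0] by auto
  show ?thesis unfolding AG_def full_def
  proof
    fix i
    show "(n - 3 \<le> pr (cc n D) i + qr (cc n D) i \<and> n - 3 \<le> pr (cc n D') i + qr (cc n D') i) \<or>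
          (pr (cc n D) i = pr (cc n D') i \<and> qr (cc n D) i = qr (cc n D') i)"
    proof (cases "n - 3 \<le> pr (cc n D) i + qr (cc n D) i")
      case True
      show ?thesis
      proof (cases "n - 3 \<le> pr (cc n D') i + qr (cc n D') i")
        case True then show ?thesis using \<open>n - 3 \<le> pr (cc n D) i + qr (cc n D) i\<close> by simp
      next
        case False
        have H': "\<forall>t. 1 \<le> t \<and> t \<le> n - 1 \<longrightarrow>
          ((t - 1 \<le> pr (cc n D') i \<or> n - 1 - t \<le> qr (cc n D') i) \<longleftrightarrow> (t - 1 \<le> pr (cc n D) i \<or> n - 1 - t \<le> qr (cc n D) i))"
          using H[of i] by blast
        have "pr (cc n D') i = pr (cc n D) i \<and> qr (cc n D') i = qr (cc n D) i"
          using notfull_eq[OF H' n7 False] .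
        then show ?thesis by simp
      qed
    next
      case False
      then show ?thesis using notfull_eq[OF H n7 False] by simp
    qed
  qed
qed

lemma AG_sym: "AG n c c' \<Longrightarrow> AG n c' c"
  unfolding AG_def by metis

lemma AG_mir: assumes "AG n c c'" shows "AG n (mir c) (mir c')"
  unfolding AG_def
proof
  fix i
  have f: "full n (mir e) i = full n e (- i)" for e
    unfolding full_def pr_mir qr_mir by (simp add: add.commute)
  have "(full n c (- i) \<and> full n c' (- i)) \<or> (pr c (- i) = pr c' (- i) \<and> qr c (- i) = qr c' (- i))"
    using assms unfolding AG_def by blast
  then show "(full n (mir c) i \<and> full n (mir c') i) \<or> (pr (mir c) i = pr (mir c') i \<and> qr (mir c) i = qr (mir c') i)"
    unfolding f pr_mir qr_mir by blast
qed

lemma per_gen: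
  assumes "\<forall>i. f (i + int n) = f i"
  shows "f (i + k * int n) = f i"
proof -
  have pos: "f (i + int m * int n) = f i" for i m
  proof (induction m arbitrary: i)
    case 0 then show ?case by simp
  next
    case (Suc m)
    have "f (i + int (Suc m) * int n) = f ((i + int m * int n) + int n)" by (simp add: algebra_simps)
    also have "\<dots> = f (i + int m * int n)" by (rule assms[rule_format])
    also have "\<dots> = f i" by (rule Suc.IH)
    finally show ?case .
  qed
  show ?thesis
  proof (cases "k \<ge> 0")
    case True
    then show ?thesis using pos[of i "nat k"] by simp
  next
    case False
    have "f (i + k * int n + int (nat (- k)) * int n) = f (i + k * int n)" by (rule pos)
    then show ?thesis using False by (simp add: algebra_simps)
  qed
qed

lemma per_mod:
  assumes "\<forall>i. f (i + int n) = f i"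
  shows "f b = f (a + (b - a) mod int n)"
proof -
  have "b = (a + (b - a) mod int n) + ((b - a) div int n) * int n" by simp
  then show ?thesis using per_gen[OF assms, of "a + (b - a) mod int n" "(b - a) div int n"] by simp
qed

lemma oneP:
  assumes pc: "per n c" and pc': "per n c'" and n7: "7 \<le> n" and ag: "AG n c c'"
    and d: "PP c a \<noteq> PP c' a"
  shows "(PP c b \<noteq> PP c' b \<longrightarrow> (b - a) mod int n = 0) \<and> (QQ c b \<longleftrightarrow> QQ c' b)"
proof -
  have n0: "n > 0" using n7 by simp
  have both: "(\<forall>s. 0 < s \<and> s < n \<longrightarrow> (PP c (a + int s) \<longleftrightarrow> PP c' (a + int s))) \<and>
              (\<forall>s. s < n \<longrightarrow> (QQ c (a + int s) \<longleftrightarrow> QQ c' (a + int s)))"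
  proof (cases "PP c a")
    case True
    then have "\<not> PP c' a" using d by simp
    then show ?thesis using one[OF pc pc' n7 ag True] by blast
  next
    case False
    then have "PP c' a" using d by simp
    have o: "(\<forall>s. 0 < s \<and> s < n \<longrightarrow> (PP c' (a + int s) \<longleftrightarrow> PP c (a + int s))) \<and>
              (\<forall>s. s < n \<longrightarrow> (QQ c' (a + int s) \<longleftrightarrow> QQ c (a + int s)))"
      using one[OF pc' pc n7 AG_sym[OF ag] \<open>PP c' a\<close> False] by blast
    then show ?thesis by auto
  qed
  define s where "s = nat ((b - a) mod int n)"
  have s: "a + (b - a) mod int n = a + int s" "s < n" using n0 s_def by (simp_all add: nat_less_iff)
  have pP: "\<forall>i. PP c (i + int n) = PP c i" "\<forall>i. PP c' (i + int n) = PP c' i"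
    "\<forall>i. QQ c (i + int n) = QQ c i" "\<forall>i. QQ c' (i + int n) = QQ c' i"
    using per_PP[OF pc] per_PP[OF pc'] per_QQ[OF pc] per_QQ[OF pc'] by auto
  have r: "PP c b = PP c (a + int s)" "PP c' b = PP c' (a + int s)"
      "QQ c b = QQ c (a + int s)" "QQ c' b = QQ c' (a + int s)"
    using per_mod[OF pP(1), of b a] per_mod[OF pP(2), of b a] per_mod[OF pP(3), of b a] per_mod[OF pP(4), of b a] s(1)
    by simp_all
  show ?thesis
  proof
    show "PP c b \<noteq> PP c' b \<longrightarrow> (b - a) mod int n = 0"
    proof
      assume "PP c b \<noteq> PP c' b"
      then have "s = 0" using both r s(2) by auto
      moreover have "0 \<le> (b - a) mod int n" using n0 by simp
      ultimately show "(b - a) mod int n = 0" using s_def by linarith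
    qed
    show "QQ c b \<longleftrightarrow> QQ c' b" using both r s(2) by auto
  qed
qed

lemma oneQ:
  assumes pc: "per n c" and pc': "per n c'" and n7: "7 \<le> n" and ag: "AG n c c'"
    and d: "QQ c a \<noteq> QQ c' a"
  shows "QQ c b \<noteq> QQ c' b \<longrightarrow> (b - a) mod int n = 0"
proof
  assume h: "QQ c b \<noteq> QQ c' b"
  have d': "PP (mir c) (- a) \<noteq> PP (mir c') (- a)" using d QQ_mir[of c a] QQ_mir[of c' a] by simp
  have "PP (mir c) (- b) \<noteq> PP (mir c') (- b)" using h QQ_mir[of c b] QQ_mir[of c' b] by simp
  then have "(- b - - a) mod int n = 0"
    using oneP[OF per_mir[OF pc] per_mir[OF pc'] n7 AG_mir[OF ag] d', of "- b"] by blast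
  then have "int n dvd (a - b)" by (simp add: dvd_eq_mod_eq_0)
  then have "int n dvd (b - a)" using dvd_diff_commute by blast
  then show "(b - a) mod int n = 0" by (simp add: dvd_eq_mod_eq_0)
qed



lemma cc_nat: "i < n \<Longrightarrow> cc n D (int i) = blk D i"
  unfolding cc_def by (simp add: mod_pos_pos_trivial)

lemma cc_suc: "n > 0 \<Longrightarrow> cc n D (int i + 1) = blk D ((i + 1) mod n)"
proof -
  assume "n > 0"
  have "(int i + 1) mod int n = int ((i + 1) mod n)" by (simp add: zmod_int add.commute)
  then show ?thesis unfolding cc_def by simp
qed

lemma lab_fwd: "i < n \<Longrightarrow> lab D (i, (i + 1) mod n) = (if PP (cc n D) (int i + 1) then LMinus else LPlus)"
  unfolding lab_def PP_def using cc_nat[of i n D] cc_suc[of n D i] by auto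

lemma lab_bwd: "i < n \<Longrightarrow> lab D ((i + 1) mod n, i) = (if QQ (cc n D) (int i) then LMinus else LPlus)"
  unfolding lab_def QQ_def using cc_nat[of i n D] cc_suc[of n D i] by auto

lemma mod_same: assumes "i < n" "i' < n" "(int i' - int i) mod int n = 0" shows "i = i'"
proof -
  have "int i' mod int n = int i mod int n" using assms(3) by (simp add: mod_eq_dvd_iff dvd_eq_mod_eq_0)
  then show ?thesis using assms(1,2) by (simp add: mod_pos_pos_trivial)
qed

theorem mainTheorem18:
  fixes n :: nat and D D' :: "nat set list"
  assumes "n > 6"
    and "is_schedule n D" and "is_schedule n D'"
    and "special_pair n D D'"
  shows "card {e \<in> arcs n. lab D e \<noteq> lab D' e} = 1"
proof -
  have n7: "7 \<le> n" using assms(1) by simp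
  have n0: "n > 0" using n7 by simp
  define c where "c = cc n D"
  define c' where "c' = cc n D'"
  have eq: "sched_fun n D = sched_fun n D'" and ne: "\<not> sched_equiv n D D'"
    using assms(4) unfolding special_pair_def by auto
  have ag: "AG n c c'" using AG_from_sched[OF assms(2,3) n7 eq] c_def c'_def by simp
  have pc: "per n c" "per n c'" using per_cc c_def c'_def by auto
  define E where "E = {e \<in> arcs n. lab D e \<noteq> lab D' e}"
  have char: "(\<exists>i<n. e = (i, (i + 1) mod n) \<and> PP c (int i + 1) \<noteq> PP c' (int i + 1)) \<or>
              (\<exists>i<n. e = ((i + 1) mod n, i) \<and> QQ c (int i) \<noteq> QQ c' (int i))" if "e \<in> E" for e
  proof -
    have "e \<in> arcs n" "lab D e \<noteq> lab D' e" using that E_def by auto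
    then consider i where "i < n" "e = (i, (i + 1) mod n)" | i where "i < n" "e = ((i + 1) mod n, i)"
      unfolding arcs_def by blast
    then show ?thesis
    proof cases
      case 1
      then have "PP c (int i + 1) \<noteq> PP c' (int i + 1)"
        using \<open>lab D e \<noteq> lab D' e\<close> lab_fwd[of i n D] lab_fwd[of i n D'] c_def c'_def by (auto split: if_splits)
      then show ?thesis using 1 by blast
    next
      case 2
      then have "QQ c (int i) \<noteq> QQ c' (int i)"
        using \<open>lab D e \<noteq> lab D' e\<close> lab_bwd[of i n D] lab_bwd[of i n D'] c_def c'_def by (auto split: if_splits)
      then show ?thesis using 2 by blast
    qed
  qed
  have uniq: "e1 = e2" if "e1 \<in> E" "e2 \<in> E" for e1 e2
  proof -
    from char[OF that(1)] char[OF that(2)] show ?thesis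
    proof (elim disjE exE conjE)
      fix i i' assume h: "i < n" "e1 = (i, (i + 1) mod n)" "PP c (int i + 1) \<noteq> PP c' (int i + 1)"
        "i' < n" "e2 = (i', (i' + 1) mod n)" "PP c (int i' + 1) \<noteq> PP c' (int i' + 1)"
      have "(int i' + 1 - (int i + 1)) mod int n = 0" using oneP[OF pc n7 ag h(3)] h(6) by blast
      then have "i = i'" using mod_same[OF h(1) h(4)] by simp
      then show ?thesis using h by simp
    next
      fix i i' assume h: "i < n" "e1 = (i, (i + 1) mod n)" "PP c (int i + 1) \<noteq> PP c' (int i + 1)"
        "i' < n" "e2 = ((i' + 1) mod n, i')" "QQ c (int i') \<noteq> QQ c' (int i')"
      then show ?thesis using oneP[OF pc n7 ag h(3)] by blast
    next
      fix i i' assume h: "i < n" "e1 = ((i + 1) mod n, i)" "QQ c (int i) \<noteq> QQ c' (int i)"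
        "i' < n" "e2 = (i', (i' + 1) mod n)" "PP c (int i' + 1) \<noteq> PP c' (int i' + 1)"
      then show ?thesis using oneP[OF pc n7 ag h(6)] by blast
    next
      fix i i' assume h: "i < n" "e1 = ((i + 1) mod n, i)" "QQ c (int i) \<noteq> QQ c' (int i)"
        "i' < n" "e2 = ((i' + 1) mod n, i')" "QQ c (int i') \<noteq> QQ c' (int i')"
      have "(int i' - int i) mod int n = 0" using oneQ[OF pc n7 ag h(3)] h(6) by blast
      then have "i = i'" using mod_same[OF h(1) h(4)] by simp
      then show ?thesis using h by simp
    qed
  qed
  obtain e where e: "e \<in> E" using ne unfolding sched_equiv_def E_def by blast
  have "E = {e}" using uniq e by blast
  then show ?thesis unfolding E_def by simp
qed


end
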